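(* Let $d,d_\pi\ge1$, $\alpha,\beta,\beta'\in\mathbb{R}$, and let $e$ be a random transition with associated random vectors $\phi_e\in\mathbb{R}^d$ and $\Delta_e\in\mathbb{R}^d$ with $\mathbb{E}_e[\phi_e\Delta_e^\top]=-M$ for a matrix $M\in\mathbb{R}^{d\times d}$. Let $H_w\in\mathbb{R}^{d_\pi\times d}$, $H_\psi\in\mathbb{R}^{d_\pi\times d_\pi}$, and define block matrices on $\mathbb{R}^d\times\mathbb{R}^{d_\pi}$ \[B_e=\begin{pmatrix}I+\alpha\phi_e\Delta_e^\top&0\\0&I\end{pmatrix},\qquad A_0=\begin{pmatrix}(1-\beta')I&0\\\beta H_w&I+\beta H_\psi\end{pmatrix},\] and $\bar\Sigma:=\mathbb{E}_e[A_0B_e-B_eA_0]$. Then the null space of $\bar\Sigma$ contains the entire policy subspace $\{(0,x_\psi):x_\psi\in\mathbb{R}^{d_\pi}\}$.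
   Context: Setting (linear actor-critic): state $\theta=(w,\psi)\in\mathbb{R}^d\times\mathbb{R}^{d_\pi}$ in coordinates centred at an equilibrium $\theta^\star=0$. The expansion is the TD update $P_e(w,\psi)=(w+\alpha\delta(w,e)\phi(s,a),\psi)$ with TD error $\delta(w,e)=r+\gamma_{\mathrm{RL}}\phi(s',a')^\top w-\phi(s,a)^\top w$ for a transition $e=(s,a,r,s')$ (with $a'$ the next action), $\phi_e=\phi(s,a)$, $\Delta_e=\gamma_{\mathrm{RL}}\phi(s',a')-\phi_e$; thus $B_e=DP_e(\theta^\star)$. The baseline consolidation is $Q_0(w,\psi)=((1-\beta')w,\psi+\beta H(w+w^\star,\psi+\psi^\star))$ with $H(w^\star,\psi^\star)=0$, $H_w,H_\psi$ the partial Jacobians of $H$ at the equilibrium, so $A_0=DQ_0(\theta^\star)$. $\bar\Sigma$ is the first-moment commutator Jacobian. *)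

theory Defs
  imports "HOL-Analysis.Analysis" "HOL-Probability.Probability"
begin

definition outer :: "real^'n \<Rightarrow> real^'m \<Rightarrow> real^'m^'n" where
  "outer u v = (\<chi> i j. u $ i * v $ j)"

text \<open>Block matrix [[P, Q], [R, S]] acting on R^d x R^dpi, with coordinates
  indexed by the sum type 'd + 'p (Inl = critic block w, Inr = policy block psi).\<close>
definition block ::
  "real^'d^'d \<Rightarrow> real^'p^'d \<Rightarrow> real^'d^'p \<Rightarrow> real^'p^'p \<Rightarrow> real^('d + 'p)^('d + 'p)" where
  "block P Q R S = (\<chi> i j. case i of
      Inl a \<Rightarrow> (case j of Inl b \<Rightarrow> P $ a $ b | Inr b \<Rightarrow> Q $ a $ b)
    | Inr a \<Rightarrow> (case j of Inl b \<Rightarrow> R $ a $ b | Inr b \<Rightarrow> S $ a $ b))"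

definition pair_vec :: "real^'d \<Rightarrow> real^'p \<Rightarrow> real^('d + 'p)" where
  "pair_vec xw xp = (\<chi> i. case i of Inl a \<Rightarrow> xw $ a | Inr b \<Rightarrow> xp $ b)"

definition B_e :: "real \<Rightarrow> real^'d::finite \<Rightarrow> real^'d \<Rightarrow> real^('d + 'p::finite)^('d + 'p)" where
  "B_e \<alpha> \<phi> \<Delta> = block (mat 1 + \<alpha> *\<^sub>R outer \<phi> \<Delta>) 0 0 (mat 1)"

definition A_0 :: "real \<Rightarrow> real \<Rightarrow> real^'d^'p \<Rightarrow> real^'p^'p \<Rightarrow> real^('d + 'p)^('d + 'p)" where
  "A_0 \<beta> \<beta>' Hw Hpsi = block ((1 - \<beta>') *\<^sub>R mat 1) 0 (\<beta> *\<^sub>R Hw) (mat 1 + \<beta> *\<^sub>R Hpsi)"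

end

theory Submission
  imports Defs
begin

lemma sum_UNIV_plus:
  fixes f :: "'a::finite + 'b::finite \<Rightarrow> real"
  shows "sum f UNIV = (\<Sum>a\<in>UNIV. f (Inl a)) + (\<Sum>b\<in>UNIV. f (Inr b))"
proof -
  have U: "UNIV = range Inl \<union> range (Inr :: 'b \<Rightarrow> 'a + 'b)"
    using UNIV_sum by blast
  have "sum f UNIV = sum f (range Inl) + sum f (range Inr)"
    unfolding U by (rule sum.union_disjoint) auto
  also have "\<dots> = (\<Sum>a\<in>UNIV. f (Inl a)) + (\<Sum>b\<in>UNIV. f (Inr b))"
    by (simp add: sum.reindex)
  finally show ?thesis .
qed

lemma mat1_sum2: "(\<Sum>k\<in>UNIV. g k * (mat 1 :: real^'n::finite^'n) $ k $ j) = g j"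
  by (simp add: mat_def if_distrib cong: if_cong)
lemma mat1_sum: "(\<Sum>k\<in>UNIV. (mat 1 :: real^'n::finite^'n) $ k $ j * g k) = g j"
  using mat1_sum2[of g j] by (simp add: mult.commute)

lemma mat1_sum3: "(\<Sum>k\<in>UNIV. (mat 1 :: real^'n::finite^'n) $ j $ k * g k) = g j"
  by (simp add: mat_def if_distrib[of "\<lambda>x. x * g _"] cong: if_cong)

lemma col_zero:
  "(A_0 \<beta> \<beta>' Hw Hpsi ** (B_e \<alpha> \<phi> \<Delta> :: real^('d::finite + 'p::finite)^('d + 'p))
         - B_e \<alpha> \<phi> \<Delta> ** A_0 \<beta> \<beta>' Hw Hpsi) $ i $ Inr j = 0"
  apply (cases i)
   apply (simp_all add: matrix_matrix_mult_def A_0_def B_e_def block_def sum_UNIV_plus)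
  apply (simp add: mat1_sum2 mat1_sum3)
  done

theorem theorem4p24:
  fixes Pr :: "'e measure"
    and \<phi> \<Delta> :: "'e \<Rightarrow> real^'d"
    and M :: "real^'d^'d"
    and Hw :: "real^'d^'p" and Hpsi :: "real^'p^'p"
    and \<alpha> \<beta> \<beta>' :: real
  assumes "prob_space Pr"
    and "integrable Pr (\<lambda>e. outer (\<phi> e) (\<Delta> e))"
    and "prob_space.expectation Pr (\<lambda>e. outer (\<phi> e) (\<Delta> e)) = - M"
  defines "Sigma_bar \<equiv> prob_space.expectation Pr
      (\<lambda>e. A_0 \<beta> \<beta>' Hw Hpsi ** (B_e \<alpha> (\<phi> e) (\<Delta> e) :: real^('d + 'p)^('d + 'p))
         - B_e \<alpha> (\<phi> e) (\<Delta> e) ** A_0 \<beta> \<beta>' Hw Hpsi)"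
  shows "\<forall>x\<psi> :: real^'p. Sigma_bar *v pair_vec (0 :: real^'d) x\<psi> = 0"
proof
  fix x\<psi> :: "real^'p"
  define F where "F = (\<lambda>e. A_0 \<beta> \<beta>' Hw Hpsi ** (B_e \<alpha> (\<phi> e) (\<Delta> e) :: real^('d + 'p)^('d + 'p))
         - B_e \<alpha> (\<phi> e) (\<Delta> e) ** A_0 \<beta> \<beta>' Hw Hpsi)"
  have S: "Sigma_bar = integral\<^sup>L Pr F" unfolding Sigma_bar_def F_def by simp
  have ent: "Sigma_bar $ i $ Inr j = 0" for i j
  proof (cases "integrable Pr F")
    case True
    have "Sigma_bar $ i $ Inr j = integral\<^sup>L Pr (\<lambda>e. F e $ i $ Inr j)"
      unfolding S
      using integral_bounded_linear[of "\<lambda>x. x $ i $ Inr j" Pr F] True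
      by (simp add: bounded_linear_compose[OF bounded_linear_vec_nth bounded_linear_vec_nth])
    also have "\<dots> = 0" unfolding F_def by (simp only: col_zero integral_zero)
    finally show ?thesis .
  next
    case False
    then show ?thesis unfolding S by (simp add: not_integrable_integral_eq)
  qed
  show "Sigma_bar *v pair_vec (0 :: real^'d) x\<psi> = 0"
    by (simp add: matrix_vector_mult_def pair_vec_def sum_UNIV_plus ent vec_eq_iff)
qed

end
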